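(* Let $\alpha > 0$, $\beta > 0$, $T > 0$, and $\tau > 0$ with $T/\tau \in \mathbb{N}$. For $u \in \mathrm{H}^1(0,T)$ let $v$ be its upwinded interpolant on $[0,T]$. Then there is a constant $C$, independent of $\alpha$ and $\tau$, such that $$\int_0^T | u - v|^2 \leq C \tau^2 \int_0^T |\dot u|^2,$$ where $\dot u$ denotes the derivative of $u$.
   Context: Given $\alpha, \beta > 0$ and the mesh of nodes $k\tau$, the upwinded interpolant of a continuous function $u$ is the unique continuous function $v$ with $v(k\tau) = u(k\tau)$ at every node and which, on each mesh interval $[k\tau, (k+1)\tau]$, is of the form $v(t) = c_1 + c_2 \exp(-\beta t/\alpha)$ for constants $c_1, c_2$ (depending on the interval). *)

theory Defs
  imports "HOL-Analysis.Analysis"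
begin

definition upwinded_interpolant ::
  "real \<Rightarrow> real \<Rightarrow> real \<Rightarrow> real \<Rightarrow> (real \<Rightarrow> real) \<Rightarrow> (real \<Rightarrow> real) \<Rightarrow> bool" where
  "upwinded_interpolant \<alpha> \<beta> \<tau> T u v \<longleftrightarrow>
     continuous_on {0..T} v \<and>
     (\<forall>k::nat. real k * \<tau> \<le> T \<longrightarrow> v (real k * \<tau>) = u (real k * \<tau>)) \<and>
     (\<forall>k::nat. real (Suc k) * \<tau> \<le> T \<longrightarrow>
        (\<exists>c1 c2. \<forall>t\<in>{real k * \<tau> .. real (Suc k) * \<tau>}.
            v t = c1 + c2 * exp (- \<beta> * t / \<alpha>)))"

end

theory Submission
  imports Defs
begin

lemma cs_int:
  fixes f :: "real \<Rightarrow> real"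
  assumes f: "f integrable_on {a..b}" and f2: "(\<lambda>x. (f x)\<^sup>2) integrable_on {a..b}" and ab: "a \<le> b"
  shows "(integral {a..b} f)\<^sup>2 \<le> (b-a) * integral {a..b} (\<lambda>x. (f x)\<^sup>2)"
proof (cases "a = b")
  case True then show ?thesis by simp
next
  case False
  hence L: "b - a > 0" using ab by simp
  define I where "I = integral {a..b} f"
  define S where "S = integral {a..b} (\<lambda>x. (f x)\<^sup>2)"
  define l where "l = I / (b-a)"
  have eq: "(\<lambda>x. (f x - l)\<^sup>2) = (\<lambda>x. (f x)\<^sup>2 - (2*l) * f x + l\<^sup>2)"
    by (auto simp: power2_eq_square algebra_simps)
  have i1: "(\<lambda>x. (2*l) * f x) integrable_on {a..b}" using integrable_on_cmult_left[OF f, of "2*l"] by simp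
  have i2: "(\<lambda>x. (f x)\<^sup>2 - (2*l) * f x) integrable_on {a..b}" using f2 i1 by (rule integrable_diff)
  have i3: "(\<lambda>x. (f x)\<^sup>2 - (2*l) * f x + l\<^sup>2) integrable_on {a..b}"
    using i2 by (intro integrable_add) auto
  have "0 \<le> integral {a..b} (\<lambda>x. (f x - l)\<^sup>2)"
    using i3 eq by (intro integral_nonneg) auto
  also have "\<dots> = S - 2*l*I + l\<^sup>2 * (b-a)"
    unfolding eq
  proof -
    have "integral {a..b} (\<lambda>x. (f x)\<^sup>2 - (2*l) * f x + l\<^sup>2)
        = integral {a..b} (\<lambda>x. (f x)\<^sup>2 - (2*l) * f x) + integral {a..b} (\<lambda>x. l\<^sup>2)"
      using i2 by (intro integral_add) auto
    also have "integral {a..b} (\<lambda>x. (f x)\<^sup>2 - (2*l) * f x) = S - integral {a..b} (\<lambda>x. (2*l) * f x)"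
      unfolding S_def using f2 i1 by (rule integral_diff)
    also have "integral {a..b} (\<lambda>x. (2*l) * f x) = 2*l*I"
      unfolding I_def by simp
    also have "integral {a..b} (\<lambda>x. l\<^sup>2) = l\<^sup>2 * (b-a)" using ab by simp
    finally show "integral {a..b} (\<lambda>x. (f x)\<^sup>2 - (2*l) * f x + l\<^sup>2) = S - 2*l*I + l\<^sup>2 * (b-a)" .
  qed
  finally have "0 \<le> S - 2*l*I + l\<^sup>2*(b-a)" .
  hence "0 \<le> (b-a) * (S - 2*l*I + l\<^sup>2*(b-a))" using L by simp
  also have "\<dots> = (b-a)*S - 2*(l*(b-a))*I + (l*(b-a))\<^sup>2" by (simp add: algebra_simps power2_eq_square)
  also have "l*(b-a) = I" using L unfolding l_def by simp
  also have "(b-a)*S - 2*I*I + I\<^sup>2 = (b-a)*S - I\<^sup>2" by (simp add: power2_eq_square)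
  finally show ?thesis unfolding I_def S_def by simp
qed

lemma split_sum:
  fixes f :: "real \<Rightarrow> real"
  assumes f: "f integrable_on {0..real N * \<tau>}" and tau: "\<tau> > 0"
  shows "m \<le> N \<Longrightarrow> integral {0..real m * \<tau>} f = (\<Sum>k<m. integral {real k * \<tau>..real (Suc k) * \<tau>} f)"
proof (induction m)
  case 0 then show ?case by simp
next
  case (Suc m)
  have sub: "{0..real (Suc m) * \<tau>} \<subseteq> {0..real N * \<tau>}" using Suc.prems tau by auto
  have fi: "f integrable_on {0..real (Suc m) * \<tau>}" using integrable_subinterval_real[OF f sub] .
  have "integral {0..real (Suc m) * \<tau>} f = integral {0..real m * \<tau>} f + integral {real m * \<tau>..real (Suc m) * \<tau>} f"
    using Henstock_Kurzweil_Integration.integral_combine[OF _ _ fi, of "real m * \<tau>"] tau by simp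
  then show ?case using Suc by simp
qed

lemma interval_bound:
  fixes u u' v :: "real \<Rightarrow> real"
  assumes ab: "a \<le> b" and tb: "b - a \<le> \<tau>" and t: "t \<in> {a..b}"
    and f: "u' integrable_on {a..b}" and f2: "(\<lambda>x. (u' x)\<^sup>2) integrable_on {a..b}"
    and ut: "u t - u a = integral {a..t} u'" and ub: "u b - u t = integral {t..b} u'"
    and va: "v a = u a" and vb: "v b = u b"
    and vform: "\<forall>s\<in>{a..b}. v s = c1 + c2 * exp (- \<beta> * s / \<alpha>)"
    and al: "\<alpha> > 0" and be: "\<beta> > 0"
  shows "(u t - v t)\<^sup>2 \<le> \<tau> * integral {a..b} (\<lambda>x. (u' x)\<^sup>2)"
proof -
  define S where "S = integral {a..b} (\<lambda>x. (u' x)\<^sup>2)"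
  have ta: "a \<le> t" "t \<le> b" using t by auto
  have f_at: "u' integrable_on {a..t}" "(\<lambda>x. (u' x)\<^sup>2) integrable_on {a..t}"
    using integrable_subinterval_real[OF f] integrable_subinterval_real[OF f2] ta by auto
  have f_tb: "u' integrable_on {t..b}" "(\<lambda>x. (u' x)\<^sup>2) integrable_on {t..b}"
    using integrable_subinterval_real[OF f] integrable_subinterval_real[OF f2] ta by auto
  have Ssplit: "S = integral {a..t} (\<lambda>x. (u' x)\<^sup>2) + integral {t..b} (\<lambda>x. (u' x)\<^sup>2)"
    unfolding S_def using Henstock_Kurzweil_Integration.integral_combine[OF ta f2] by simp
  have n1: "integral {a..t} (\<lambda>x. (u' x)\<^sup>2) \<ge> 0" using f_at by (intro integral_nonneg) auto
  have n2: "integral {t..b} (\<lambda>x. (u' x)\<^sup>2) \<ge> 0" using f_tb by (intro integral_nonneg) auto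
  have S0: "S \<ge> 0" using Ssplit n1 n2 by simp
  have A: "(u t - u a)\<^sup>2 \<le> \<tau> * S"
  proof -
    have "(u t - u a)\<^sup>2 \<le> (t - a) * integral {a..t} (\<lambda>x. (u' x)\<^sup>2)"
      using cs_int[OF f_at ta(1)] ut by simp
    also have "\<dots> \<le> \<tau> * S"
      using Ssplit n1 n2 ta tb by (intro mult_mono) auto
    finally show ?thesis .
  qed
  have B: "(u t - u b)\<^sup>2 \<le> \<tau> * S"
  proof -
    have "(u t - u b)\<^sup>2 = (u b - u t)\<^sup>2" by (simp add: power2_commute)
    also have "\<dots> \<le> (b - t) * integral {t..b} (\<lambda>x. (u' x)\<^sup>2)"
      using cs_int[OF f_tb ta(2)] ub by simp
    also have "\<dots> \<le> \<tau> * S"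
      using Ssplit n1 n2 ta tb by (intro mult_mono) auto
    finally show ?thesis .
  qed
  define e where "e = (\<lambda>s. exp (- \<beta> * s / \<alpha>))"
  have emono: "\<And>x y. x \<le> y \<Longrightarrow> e y \<le> e x"
    unfolding e_def using al be by (auto simp: divide_right_mono mult_left_mono)
  have ve: "\<And>s. s \<in> {a..b} \<Longrightarrow> v s = c1 + c2 * e s" using vform unfolding e_def by auto
  obtain th where th: "0 \<le> th" "th \<le> 1" "v t = (1 - th) * u a + th * u b"
  proof (cases "a = b")
    case True
    then have "t = a" using ta by simp
    then show ?thesis using that[of 0] va by simp
  next
    case False
    have ebs: "e b < e a"
      unfolding e_def using al be ab False by (auto simp: divide_strict_right_mono)
    define th where "th = (e t - e a) / (e b - e a)"
    have "e t - e a \<le> 0" "e b - e a \<le> e t - e a" using emono ta by auto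
    hence "0 \<le> th" "th \<le> 1" unfolding th_def using ebs
      by (auto simp: divide_le_eq_1 zero_le_divide_iff)
    moreover have "v t = (1 - th) * u a + th * u b"
    proof -
      have "v t = v a + th * (v b - v a)"
        using ve[of t] ve[of a] ve[of b] ta ab ebs unfolding th_def
        by (auto simp: field_simps)
      then show ?thesis using va vb by (simp add: algebra_simps)
    qed
    ultimately show ?thesis using that by blast
  qed
  have "u t - v t = (1 - th) * (u t - u a) + th * (u t - u b)" using th(3) by (simp add: algebra_simps)
  hence "(u t - v t)\<^sup>2 \<le> (1 - th) * (u t - u a)\<^sup>2 + th * (u t - u b)\<^sup>2"
  proof -
    assume h: "u t - v t = (1 - th) * (u t - u a) + th * (u t - u b)"
    have "(1 - th) * (u t - u a)\<^sup>2 + th * (u t - u b)\<^sup>2 - ((1 - th) * (u t - u a) + th * (u t - u b))\<^sup>2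
        = th * (1 - th) * ((u t - u a) - (u t - u b))\<^sup>2"
      by (simp add: power2_eq_square algebra_simps)
    moreover have "th * (1 - th) * ((u t - u a) - (u t - u b))\<^sup>2 \<ge> 0" using th by simp
    ultimately show ?thesis using h by simp
  qed
  also have "\<dots> \<le> (1 - th) * (\<tau> * S) + th * (\<tau> * S)"
    using A B th by (intro add_mono mult_left_mono) auto
  also have "\<dots> = \<tau> * S" by (simp add: algebra_simps)
  finally show ?thesis unfolding S_def .
qed

theorem proposition9:
  fixes \<beta> T :: real
  assumes "\<beta> > 0" and "T > 0"
  shows "\<exists>C::real. \<forall>(\<alpha>::real) (\<tau>::real) (u::real \<Rightarrow> real) (u'::real \<Rightarrow> real) (v::real \<Rightarrow> real).
     \<alpha> > 0 \<longrightarrow> \<tau> > 0 \<longrightarrow> T / \<tau> \<in> \<nat> \<longrightarrow>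
     u' integrable_on {0..T} \<longrightarrow> (\<lambda>t. (u' t)\<^sup>2) integrable_on {0..T} \<longrightarrow>
     (\<forall>t\<in>{0..T}. u t = u 0 + integral {0..t} u') \<longrightarrow>
     upwinded_interpolant \<alpha> \<beta> \<tau> T u v \<longrightarrow>
     integral {0..T} (\<lambda>t. (u t - v t)\<^sup>2) \<le> C * \<tau>\<^sup>2 * integral {0..T} (\<lambda>t. (u' t)\<^sup>2)"
proof (intro exI[of _ 1] allI impI)
  fix \<alpha> \<tau> :: real and u u' v :: "real \<Rightarrow> real"
  assume al: "\<alpha> > 0" and tau: "\<tau> > 0" and TN: "T / \<tau> \<in> \<nat>"
    and f: "u' integrable_on {0..T}" and f2: "(\<lambda>t. (u' t)\<^sup>2) integrable_on {0..T}"
    and uu: "\<forall>t\<in>{0..T}. u t = u 0 + integral {0..t} u'"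
    and up: "upwinded_interpolant \<alpha> \<beta> \<tau> T u v"
  obtain N :: nat where N: "T / \<tau> = real N" using TN by (auto elim: Nats_cases)
  have TNt: "T = real N * \<tau>" using N tau by (simp add: field_simps)
  have S0: "integral {0..T} (\<lambda>t. (u' t)\<^sup>2) \<ge> 0" using f2 by (intro integral_nonneg) auto
  show "integral {0..T} (\<lambda>t. (u t - v t)\<^sup>2) \<le> 1 * \<tau>\<^sup>2 * integral {0..T} (\<lambda>t. (u' t)\<^sup>2)"
  proof (cases "(\<lambda>t. (u t - v t)\<^sup>2) integrable_on {0..T}")
    case False
    then show ?thesis using S0 by (simp add: not_integrable_integral)
  next
    case True
    have key: "integral {real k * \<tau>..real (Suc k) * \<tau>} (\<lambda>t. (u t - v t)\<^sup>2)
          \<le> \<tau>\<^sup>2 * integral {real k * \<tau>..real (Suc k) * \<tau>} (\<lambda>t. (u' t)\<^sup>2)" if k: "k < N" for k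
    proof -
      define a where "a = real k * \<tau>"
      define b where "b = real (Suc k) * \<tau>"
      have ab: "a \<le> b" "b - a = \<tau>" unfolding a_def b_def using tau by (auto simp: algebra_simps)
      have a0: "0 \<le> a" unfolding a_def using tau by simp
      have bT: "b \<le> T" unfolding b_def TNt using k tau by (intro mult_right_mono) auto
      have sub: "{a..b} \<subseteq> {0..T}" using a0 bT by auto
      have fi: "u' integrable_on {a..b}" "(\<lambda>x. (u' x)\<^sup>2) integrable_on {a..b}"
        "(\<lambda>t. (u t - v t)\<^sup>2) integrable_on {a..b}"
        using integrable_subinterval_real[OF f sub] integrable_subinterval_real[OF f2 sub]
          integrable_subinterval_real[OF True sub] by auto
      obtain c1 c2 where vf: "\<forall>s\<in>{a..b}. v s = c1 + c2 * exp (- \<beta> * s / \<alpha>)"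
        using up bT unfolding upwinded_interpolant_def a_def b_def by blast
      have va: "v a = u a" using up bT ab unfolding upwinded_interpolant_def a_def by auto
      have nodes: "\<forall>k::nat. real k * \<tau> \<le> T \<longrightarrow> v (real k * \<tau>) = u (real k * \<tau>)"
        using up unfolding upwinded_interpolant_def by blast
      have vb: "v b = u b" proof -
        have "real (Suc k) * \<tau> \<le> T \<longrightarrow> v (real (Suc k) * \<tau>) = u (real (Suc k) * \<tau>)"
          by (rule spec[OF nodes])
        then show ?thesis using bT unfolding b_def by (simp only:)
      qed
      have diff: "u y - u x = integral {x..y} u'" if "0 \<le> x" "x \<le> y" "y \<le> T" for x y
      proof -
        have fy: "u' integrable_on {0..y}" using integrable_subinterval_real[OF f] that by auto
        have "integral {0..x} u' + integral {x..y} u' = integral {0..y} u'"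
          using Henstock_Kurzweil_Integration.integral_combine[OF that(1,2) fy] .
        moreover have "u y = u 0 + integral {0..y} u'" "u x = u 0 + integral {0..x} u'"
          using bspec[OF uu, of y] bspec[OF uu, of x] that by auto
        ultimately show ?thesis by simp
      qed
      have pt: "\<forall>t\<in>{a..b}. (u t - v t)\<^sup>2 \<le> \<tau> * integral {a..b} (\<lambda>x. (u' x)\<^sup>2)"
      proof
        fix t assume t: "t \<in> {a..b}"
        show "(u t - v t)\<^sup>2 \<le> \<tau> * integral {a..b} (\<lambda>x. (u' x)\<^sup>2)"
          apply (rule interval_bound[OF ab(1) _ t fi(1,2) _ _ va vb vf al assms(1)])
          using ab t a0 bT diff by auto
      qed
      have "integral {a..b} (\<lambda>t. (u t - v t)\<^sup>2) \<le> integral {a..b} (\<lambda>t. \<tau> * integral {a..b} (\<lambda>x. (u' x)\<^sup>2))"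
        using fi(3) pt by (intro integral_le) auto
      also have "\<dots> = \<tau>\<^sup>2 * integral {a..b} (\<lambda>x. (u' x)\<^sup>2)"
        using ab by (simp add: power2_eq_square)
      finally show ?thesis unfolding a_def b_def .
    qed
    have "integral {0..T} (\<lambda>t. (u t - v t)\<^sup>2) = (\<Sum>k<N. integral {real k * \<tau>..real (Suc k) * \<tau>} (\<lambda>t. (u t - v t)\<^sup>2))"
      using split_sum[of "\<lambda>t. (u t - v t)\<^sup>2" N \<tau> N] True tau TNt by simp
    also have "\<dots> \<le> (\<Sum>k<N. \<tau>\<^sup>2 * integral {real k * \<tau>..real (Suc k) * \<tau>} (\<lambda>t. (u' t)\<^sup>2))"
      using key by (intro sum_mono) auto
    also have "\<dots> = \<tau>\<^sup>2 * integral {0..T} (\<lambda>t. (u' t)\<^sup>2)"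
      using split_sum[of "\<lambda>t. (u' t)\<^sup>2" N \<tau> N] f2 tau TNt by (simp add: sum_distrib_left)
    finally show ?thesis by simp
  qed
qed

end
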